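(* For every $n \geq 1$, every $p=(p_1,\ldots,p_n) \in (0,1)^n$ with $p_1 + \cdots + p_n \leq 1$ and every integer $k \geq 0$, $$\Pr\{T_{n,n}(p) > k\} \geq \Pr\{T_{n,n}(v) > k\} \geq \Pr\{T_{n,n}(u) > k\},$$ where $p_0 = 1 - (p_1 + \cdots + p_n)$, $v=(v_1,\ldots,v_n)$ with $v_i = (1-p_0)/n$, and $u=(1/n,\ldots,1/n)$.
   Context: For a vector $q=(q_1,\ldots,q_n)$ of nonnegative reals with $q_1+\cdots+q_n\le 1$, let $q_0 = 1-(q_1+\cdots+q_n)$; coupons are drawn independently, one at each time $1,2,\ldots$, from $\{0,1,\ldots,n\}$, coupon $i$ with probability $q_i$, and coupon $0$ never belongs to the collection. $T_{n,n}(q)$ is the number of draws needed until all $n$ coupons $1,\ldots,n$ have been drawn at least once. *)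

theory Defs
  imports "HOL-Probability.Probability"
begin

text \<open>Coupon probabilities are given as a function q :: nat => real; only q 1, ..., q n
  are used. Coupon 0 has probability q_0 = 1 - (q 1 + ... + q n).\<close>

definition coupon_weight :: "nat \<Rightarrow> (nat \<Rightarrow> real) \<Rightarrow> nat \<Rightarrow> real" where
  "coupon_weight n q i = (if i = 0 then 1 - (\<Sum>j\<in>{1..n}. q j) else if i \<le> n then q i else 0)"

definition coupon_pmf :: "nat \<Rightarrow> (nat \<Rightarrow> real) \<Rightarrow> nat pmf" where
  "coupon_pmf n q = embed_pmf (coupon_weight n q)"

text \<open>Independent draws at times 1,2,...: element i of the stream is the draw at time i+1.\<close>
definition draws :: "nat \<Rightarrow> (nat \<Rightarrow> real) \<Rightarrow> nat stream measure" where
  "draws n q = stream_space (measure_pmf (coupon_pmf n q))"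

definition T_nn :: "nat \<Rightarrow> nat stream \<Rightarrow> enat" where
  "T_nn n \<omega> = (if \<exists>t. {1..n} \<subseteq> set (stake t \<omega>)
                 then enat (LEAST t. {1..n} \<subseteq> set (stake t \<omega>)) else \<infinity>)"

end

theory Submission
  imports Defs "HOL-Computational_Algebra.Formal_Power_Series"
begin
no_notation vec_nth (infixl "$" 90)
notation fps_nth (infixl "$" 75)

definition fle :: "real fps \<Rightarrow> real fps \<Rightarrow> bool" where "fle f g = (\<forall>k. f $ k \<le> g $ k)"
definition fnn :: "real fps \<Rightarrow> bool" where "fnn f = (\<forall>k. 0 \<le> f $ k)"
definition FF :: "real \<Rightarrow> real fps" where "FF a = fps_exp a - 1"

lemma fnn_exp: "0 \<le> a \<Longrightarrow> fnn (fps_exp a)"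
  by (simp add: fnn_def)

lemma FF_nth: "FF a $ k = (if k = 0 then 0 else a^k / fact k)"
  by (simp add: FF_def)

lemma fnn_FF: "0 \<le> a \<Longrightarrow> fnn (FF a)"
  by (simp add: fnn_def FF_nth)

lemma fnn_mult: "fnn f \<Longrightarrow> fnn g \<Longrightarrow> fnn (f*g)"
  unfolding fnn_def fps_mult_nth by (auto intro!: sum_nonneg)

lemma fnn_prod: "(\<And>i. i\<in>I \<Longrightarrow> fnn (f i)) \<Longrightarrow> fnn (prod f I)"
proof (induction I rule: infinite_finite_induct)
  case (infinite A) then show ?case by (simp add: fnn_def)
next
  case empty then show ?case by (simp add: fnn_def)
next
  case (insert x F) then show ?case by (simp add: fnn_mult)
qed

lemma fle_refl: "fle f f" by (simp add: fle_def)

lemma fle_mult: "fle f1 g1 \<Longrightarrow> fle f2 g2 \<Longrightarrow> fnn f1 \<Longrightarrow> fnn f2 \<Longrightarrow> fle (f1*f2) (g1*g2)"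
  unfolding fle_def fnn_def fps_mult_nth
proof (intro allI sum_mono)
  fix k i
  assume a: "\<forall>k. f1 $ k \<le> g1 $ k" "\<forall>k. f2 $ k \<le> g2 $ k" "\<forall>k. 0 \<le> f1 $ k" "\<forall>k. 0 \<le> f2 $ k"
  have "0 \<le> g1 $ i" using a(1,3) by (meson order_trans)
  then show "f1 $ i * f2 $ (k - i) \<le> g1 $ i * g2 $ (k - i)"
    using a by (intro mult_mono) auto
qed

lemma fle_prod: "(\<And>i. i\<in>I \<Longrightarrow> fle (f i) (g i) \<and> fnn (f i)) \<Longrightarrow> fle (prod f I) (prod g I)"
proof (induction I rule: infinite_finite_induct)
  case (infinite A) then show ?case by (simp add: fle_def)
next
  case empty then show ?case by (simp add: fle_def)
next
  case (insert x F) then show ?case by (simp add: fle_mult fnn_prod)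
qed

lemma pow_diff_mono:
  fixes x y d :: real
  assumes "0 \<le> x" "x \<le> y" "0 \<le> d"
  shows "0 \<le> (x+d)^m - x^m \<and> (x+d)^m - x^m \<le> (y+d)^m - y^m"
proof (induction m)
  case 0 then show ?case by simp
next
  case (Suc m)
  have e1: "(x+d)^Suc m - x^Suc m = (x+d)*((x+d)^m - x^m) + d * x^m" by (simp add: algebra_simps)
  have e2: "(y+d)^Suc m - y^Suc m = (y+d)*((y+d)^m - y^m) + d * y^m" by (simp add: algebra_simps)
  have "(x+d)*((x+d)^m - x^m) \<le> (y+d)*((y+d)^m - y^m)"
    using Suc assms by (intro mult_mono) auto
  moreover have "d * x^m \<le> d * y^m" using assms by (intro mult_left_mono power_mono) auto
  moreover have "0 \<le> (x+d)*((x+d)^m - x^m) + d * x^m" using Suc assms by auto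
  ultimately show ?case unfolding e1 e2 by linarith
qed

lemma pair_smooth:
  fixes a b w :: real
  assumes "0 \<le> a" "a \<le> w" "w \<le> b"
  shows "fle (FF a * FF b) (FF w * FF (a+b-w))"
proof -
  have eq: "FF x * FF y = fps_exp (x+y) - fps_exp x - fps_exp y + 1" for x y :: real
    by (simp add: FF_def fps_exp_add_mult algebra_simps)
  have key: "w^m + (a+b-w)^m \<le> a^m + b^m" for m
    using pow_diff_mono[of a "a+b-w" "w-a" m] assms by simp
  show ?thesis unfolding fle_def eq
  proof
    fix k
    have "w^k / fact k + (a+b-w)^k / fact k \<le> a^k / fact k + b^k / fact k"
      using key[of k] by (simp add: add_divide_distrib[symmetric] divide_right_mono)
    then show "(fps_exp (a + b) - fps_exp a - fps_exp b + 1) $ k \<le>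
         (fps_exp (w + (a + b - w)) - fps_exp w - fps_exp (a + b - w) + 1) $ k"
      by simp
  qed
qed

lemma fle_trans: "fle f g \<Longrightarrow> fle g h \<Longrightarrow> fle f h"
  unfolding fle_def by (meson order_trans)

lemma smooth_all:
  assumes "finite I" "\<forall>i\<in>I. 0 \<le> p i" "sum p I = real (card I) * w"
  shows "fle (\<Prod>i\<in>I. FF (p i)) (\<Prod>i\<in>I. FF w)"
  using assms
proof (induction "card I" arbitrary: I p rule: less_induct)
  case less
  note fin = less.prems(1) and nn = less.prems(2) and sm = less.prems(3)
  show ?case
  proof (cases "card I \<le> 1")
    case True
    then have "I = {} \<or> (\<exists>i. I = {i})" using fin
      by (metis card_0_eq card_1_singletonE le_Suc_eq One_nat_def le_zero_eq)
    then show ?thesis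
    proof
      assume "I = {}" then show ?thesis by (simp add: fle_refl)
    next
      assume "\<exists>i. I = {i}"
      then obtain i where "I = {i}" by blast
      with sm show ?thesis by (simp add: fle_refl)
    qed
  next
    case False
    then have cI: "card I \<ge> 2" by simp
    have Ine: "I \<noteq> {}" using cI by auto
    obtain i where iI: "i \<in> I" and pi: "p i \<le> w"
    proof (rule ccontr)
      assume "\<not> thesis"
      then have "\<forall>x\<in>I. w < p x" using that by force
      then have "sum (\<lambda>_. w) I < sum p I" using fin Ine by (intro sum_strict_mono) auto
      then show False using sm by simp
    qed
    define J where "J = I - {i}"
    have finJ: "finite J" using fin J_def by simp
    have cJ: "card J = card I - 1" using iI fin J_def by simp
    have sumJ: "sum p I = p i + sum p J" using iI fin J_def by (simp add: sum.remove)
    obtain j where jJ: "j \<in> J" and pj: "w \<le> p j"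
    proof (rule ccontr)
      assume "\<not> thesis"
      then have "\<forall>x\<in>J. p x < w" using that by force
      moreover have "J \<noteq> {}" using cJ cI by auto
      ultimately have "sum p J < sum (\<lambda>_. w) J" using finJ by (intro sum_strict_mono) auto
      then have "sum p J < real (card J) * w" by simp
      then have "sum p I < (real (card J) + 1) * w" using sumJ pi by (simp add: algebra_simps)
      moreover have "real (card J) + 1 = real (card I)" using cJ cI by simp
      ultimately show False using sm by simp
    qed
    have ij: "i \<noteq> j" using jJ J_def by auto
    have jI: "j \<in> I" using jJ J_def by auto
    have w0: "0 \<le> w" using nn iI pi pj jI by force
    define p' where "p' = p(j := p i + p j - w)"
    define K where "K = J - {j}"
    have finK: "finite K" using finJ K_def by simp
    have sumJ': "sum p' J = p' j + sum p' K" using jJ finJ K_def by (simp add: sum.remove)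
    have sumJ2: "sum p J = p j + sum p K" using jJ finJ K_def by (simp add: sum.remove)
    have eqK: "sum p' K = sum p K" using K_def p'_def by (intro sum.cong) auto
    have "sum p' J = real (card J) * w"
      using sumJ' sumJ2 eqK sumJ sm cJ cI p'_def by (simp add: algebra_simps of_nat_diff)
    moreover have "\<forall>x\<in>J. 0 \<le> p' x" using nn p'_def J_def pi pj iI by auto
    moreover have "card J < card I" using cJ cI by simp
    ultimately have IH: "fle (\<Prod>x\<in>J. FF (p' x)) (\<Prod>x\<in>J. FF w)"
      using less.hyps finJ by blast
    have PI: "(\<Prod>x\<in>I. FF (q x)) = FF (q i) * FF (q j) * (\<Prod>x\<in>K. FF (q x))" for q
    proof -
      have "(\<Prod>x\<in>I. FF (q x)) = FF (q i) * (\<Prod>x\<in>J. FF (q x))"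
        using iI fin J_def by (simp add: prod.remove)
      also have "(\<Prod>x\<in>J. FF (q x)) = FF (q j) * (\<Prod>x\<in>K. FF (q x))"
        using jJ finJ K_def by (simp add: prod.remove)
      finally show ?thesis by (simp add: mult.assoc)
    qed
    have PJ: "(\<Prod>x\<in>J. FF (p' x)) = FF (p i + p j - w) * (\<Prod>x\<in>K. FF (p x))"
    proof -
      have "(\<Prod>x\<in>J. FF (p' x)) = FF (p' j) * (\<Prod>x\<in>K. FF (p' x))"
        using jJ finJ K_def by (simp add: prod.remove)
      also have "(\<Prod>x\<in>K. FF (p' x)) = (\<Prod>x\<in>K. FF (p x))"
        using K_def p'_def by (intro prod.cong) auto
      finally show ?thesis by (simp add: p'_def)
    qed
    have PIw: "(\<Prod>x\<in>I. FF w) = FF w * (\<Prod>x\<in>J. FF w)"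
      unfolding J_def using fin iI by (rule prod.remove)
    have nnK: "fnn (\<Prod>x\<in>K. FF (p x))"
      using nn K_def J_def by (intro fnn_prod fnn_FF) auto
    have s1: "fle (\<Prod>x\<in>I. FF (p x)) (FF w * FF (p i + p j - w) * (\<Prod>x\<in>K. FF (p x)))"
      unfolding PI
    proof (rule fle_mult[OF pair_smooth[of "p i" w "p j"] fle_refl])
      show "fnn (FF (p i) * FF (p j))" using nn iI jI by (intro fnn_mult fnn_FF) auto
    qed (use nn iI pi pj nnK in auto)
    have s2: "fle (FF w * (\<Prod>x\<in>J. FF (p' x))) (FF w * (\<Prod>x\<in>J. FF w))"
      using IH w0 \<open>\<forall>x\<in>J. 0 \<le> p' x\<close>
      by (intro fle_mult fle_refl fnn_FF fnn_prod) auto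
    have eqq: "FF w * FF (p i + p j - w) * (\<Prod>x\<in>K. FF (p x)) = FF w * (\<Prod>x\<in>J. FF (p' x))"
      unfolding PJ by (simp add: mult.assoc)
    have "fle (\<Prod>x\<in>I. FF (p x)) (FF w * (\<Prod>x\<in>J. FF w))"
      using fle_trans[OF s1 s2[folded eqq]] by simp
    then show ?thesis unfolding PIw .
  qed
qed

lemma FF_deriv: "fps_deriv (FF a) = fps_const a * fps_exp a"
  by (simp add: FF_def)

lemma deriv_E:
  fixes q :: "nat \<Rightarrow> real"
  assumes "finite R"
  shows "fps_deriv (fps_exp c * (\<Prod>r\<in>R. FF (q r))) =
     fps_const c * fps_exp c * (\<Prod>r\<in>R. FF (q r)) +
     (\<Sum>r\<in>R. fps_const (q r) * fps_exp (c + q r) * (\<Prod>s\<in>R-{r}. FF (q s)))"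
  using assms
proof (induction R rule: finite_induct)
  case empty then show ?case by simp
next
  case (insert a R)
  define P where "P = (\<Prod>r\<in>R. FF (q r))"
  define S where "S = (\<Sum>r\<in>R. fps_const (q r) * fps_exp (c + q r) * (\<Prod>s\<in>R-{r}. FF (q s)))"
  have IH: "fps_deriv (fps_exp c * P) = fps_const c * fps_exp c * P + S"
    using insert.IH unfolding P_def S_def .
  have pins: "(\<Prod>r\<in>insert a R. FF (q r)) = FF (q a) * P"
    using insert by (simp add: P_def)
  have "fps_deriv (fps_exp c * (\<Prod>r\<in>insert a R. FF (q r))) = fps_deriv (FF (q a) * (fps_exp c * P))"
    unfolding pins by (simp add: algebra_simps)
  also have "\<dots> = FF (q a) * fps_deriv (fps_exp c * P) + fps_deriv (FF (q a)) * (fps_exp c * P)"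
    by (rule fps_deriv_mult)
  also have "\<dots> = FF (q a) * (fps_const c * fps_exp c * P + S) + fps_const (q a) * fps_exp (q a) * (fps_exp c * P)"
    unfolding IH FF_deriv ..
  also have "\<dots> = fps_const c * fps_exp c * (FF (q a) * P) + (fps_const (q a) * fps_exp (c + q a) * P + FF (q a) * S)"
    by (simp add: algebra_simps fps_exp_add_mult)
  also have "FF (q a) * S = (\<Sum>r\<in>R. fps_const (q r) * fps_exp (c + q r) * (\<Prod>s\<in>insert a R-{r}. FF (q s)))"
  proof -
    have "FF (q a) * S = (\<Sum>r\<in>R. FF (q a) * (fps_const (q r) * fps_exp (c + q r) * (\<Prod>s\<in>R-{r}. FF (q s))))"
      unfolding S_def by (simp add: sum_distrib_left)
    also have "\<dots> = (\<Sum>r\<in>R. fps_const (q r) * fps_exp (c + q r) * (\<Prod>s\<in>insert a R-{r}. FF (q s)))"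
    proof (rule sum.cong)
      fix r assume "r \<in> R"
      then have "insert a R - {r} = insert a (R - {r})" "a \<notin> R - {r}" using insert by auto
      then have "(\<Prod>s\<in>insert a R-{r}. FF (q s)) = FF (q a) * (\<Prod>s\<in>R-{r}. FF (q s))"
        using insert by simp
      then show "FF (q a) * (fps_const (q r) * fps_exp (c + q r) * (\<Prod>s\<in>R-{r}. FF (q s))) =
          fps_const (q r) * fps_exp (c + q r) * (\<Prod>s\<in>insert a R-{r}. FF (q s))"
        by (simp add: algebra_simps)
    qed simp
    finally show ?thesis .
  qed
  also have "fps_const (q a) * fps_exp (c + q a) * P + (\<Sum>r\<in>R. fps_const (q r) * fps_exp (c + q r) * (\<Prod>s\<in>insert a R-{r}. FF (q s)))
      = (\<Sum>r\<in>insert a R. fps_const (q r) * fps_exp (c + q r) * (\<Prod>s\<in>insert a R-{r}. FF (q s)))"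
  proof -
    have "insert a R - {a} = R" using insert by auto
    then show ?thesis using insert by (simp add: P_def)
  qed
  finally show ?case unfolding pins .
qed

definition EE :: "(nat \<Rightarrow> real) \<Rightarrow> nat set \<Rightarrow> nat set \<Rightarrow> real fps" where
  "EE q U R = fps_exp (sum q (U - R)) * (\<Prod>r\<in>R. FF (q r))"

lemma fps_const_sum': "fps_const (sum f A) = (\<Sum>x\<in>A. fps_const (f x) :: real fps)"
  by (induction A rule: infinite_finite_induct) (simp_all add: fps_const_add[symmetric] del: fps_const_add)

lemma deriv_EE:
  assumes "finite U" "R \<subseteq> U"
  shows "fps_deriv (EE q U R) = (\<Sum>x\<in>U. fps_const (q x) * EE q U (R - {x}))"
proof -
  have finR: "finite R" using assms finite_subset by blast
  have split: "U = (U - R) \<union> R" "(U - R) \<inter> R = {}" using assms by auto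
  have "(\<Sum>x\<in>U. fps_const (q x) * EE q U (R - {x})) =
      (\<Sum>x\<in>U-R. fps_const (q x) * EE q U (R - {x})) + (\<Sum>x\<in>R. fps_const (q x) * EE q U (R - {x}))"
    using assms finR by (subst split(1)) (rule sum.union_disjoint, auto)
  also have "(\<Sum>x\<in>U-R. fps_const (q x) * EE q U (R - {x})) = fps_const (sum q (U - R)) * EE q U R"
    by (simp add: fps_const_sum' sum_distrib_right)
  also have "(\<Sum>x\<in>R. fps_const (q x) * EE q U (R - {x})) =
     (\<Sum>r\<in>R. fps_const (q r) * fps_exp (sum q (U - R) + q r) * (\<Prod>s\<in>R-{r}. FF (q s)))"
  proof (rule sum.cong)
    fix r assume r: "r \<in> R"
    then have "U - (R - {r}) = insert r (U - R)" "r \<notin> U - R" using assms by auto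
    then have "sum q (U - (R - {r})) = sum q (U - R) + q r" using assms by simp
    then show "fps_const (q r) * EE q U (R - {r}) = fps_const (q r) * fps_exp (sum q (U - R) + q r) * (\<Prod>s\<in>R-{r}. FF (q s))"
      by (simp add: EE_def mult.assoc)
  qed simp
  finally show ?thesis unfolding EE_def using deriv_E[OF finR] by (simp add: mult.assoc)
qed

lemma prod_nth0: "(\<Prod>r\<in>R. f r :: real fps) $ 0 = (\<Prod>r\<in>R. f r $ 0)"
  by (induction R rule: infinite_finite_induct) auto

lemma EE_0: "finite R \<Longrightarrow> EE q U R $ 0 = (if R = {} then 1 else 0)"
  by (simp add: EE_def prod_nth0 FF_nth card_gt_0_iff)

lemma EE_Suc:
  assumes "finite U" "R \<subseteq> U"
  shows "fact (Suc k) * EE q U R $ Suc k = (\<Sum>x\<in>U. q x * (fact k * EE q U (R - {x}) $ k))"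
proof -
  have "fact (Suc k) * EE q U R $ Suc k = fact k * (fps_deriv (EE q U R) $ k)"
    by (simp add: algebra_simps)
  also have "\<dots> = (\<Sum>x\<in>U. q x * (fact k * EE q U (R - {x}) $ k))"
    unfolding deriv_EE[OF assms] fps_sum_nth by (simp add: sum_distrib_left algebra_simps)
  finally show ?thesis .
qed

lemma meas_cover[measurable]:
  fixes M :: "nat pmf"
  shows "Measurable.pred (stream_space (measure_pmf M)) (\<lambda>x. R \<subseteq> set (stake k x))"
proof -
  have "sets (stream_space (measure_pmf M)) = sets (stream_space (count_space UNIV))"
    by (intro sets_stream_space_cong) simp
  then have m: "stake k \<in> measurable (stream_space (measure_pmf M)) (count_space UNIV)"
    using measurable_stake[of k] by (simp add: measurable_def space_stream_space)
  show ?thesis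
    using measurable_compose[OF m, of "\<lambda>l. R \<subseteq> set l"] by (simp add: o_def)
qed

definition QQ :: "nat pmf \<Rightarrow> nat \<Rightarrow> nat set \<Rightarrow> real" where
  "QQ M k R = measure (stream_space (measure_pmf M)) {\<omega>\<in>space (stream_space (measure_pmf M)). R \<subseteq> set (stake k \<omega>)}"

lemma QQ_0: "QQ M 0 R = (if R = {} then 1 else 0)"
proof -
  interpret S: prob_space "stream_space (measure_pmf M)"
    by (rule prob_space.prob_space_stream_space[OF measure_pmf.prob_space_axioms])
  show ?thesis by (simp add: QQ_def S.prob_space)
qed

lemma QQ_Suc:
  assumes "finite U" "set_pmf M \<subseteq> U"
  shows "QQ M (Suc k) R = (\<Sum>x\<in>U. pmf M x * QQ M k (R - {x}))"
proof -
  interpret S: prob_space "stream_space (measure_pmf M)"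
    by (rule prob_space.prob_space_stream_space[OF measure_pmf.prob_space_axioms])
  have ev: "{\<omega>\<in>space (stream_space (measure_pmf M)). R \<subseteq> set (stake (Suc k) \<omega>)} \<in> sets (stream_space (measure_pmf M))"
    by measurable
  have "ennreal (QQ M (Suc k) R) = (\<integral>\<^sup>+t. ennreal (QQ M k (R - {t})) \<partial>measure_pmf M)"
    unfolding QQ_def
    by (subst prob_space.prob_stream_space[OF measure_pmf.prob_space_axioms, OF ev]) (auto intro!: nn_integral_cong arg_cong[where f=ennreal] arg_cong[where f="measure _"])
  also have "\<dots> = (\<Sum>x\<in>U. ennreal (QQ M k (R - {x})) * pmf M x)"
    using assms by (intro nn_integral_measure_pmf_support) auto
  also have "\<dots> = ennreal (\<Sum>x\<in>U. pmf M x * QQ M k (R - {x}))"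
    by (subst sum_ennreal[symmetric]) (auto simp: QQ_def ennreal_mult'' mult.commute)
  finally show ?thesis
    by (subst (asm) ennreal_inj) (auto simp: QQ_def intro!: sum_nonneg)
qed


lemma QQ_EE:
  assumes "finite U" "set_pmf M \<subseteq> U" "\<And>x. x \<in> U \<Longrightarrow> pmf M x = q x" "R \<subseteq> U"
  shows "QQ M k R = fact k * EE q U R $ k"
  using assms(4)
proof (induction k arbitrary: R)
  case 0
  have "finite R" using 0 assms(1) finite_subset by blast
  then show ?case by (simp add: QQ_0 EE_0)
next
  case (Suc k)
  have "QQ M (Suc k) R = (\<Sum>x\<in>U. pmf M x * QQ M k (R - {x}))"
    using assms(1,2) by (rule QQ_Suc)
  also have "\<dots> = (\<Sum>x\<in>U. q x * (fact k * EE q U (R - {x}) $ k))"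
  proof (rule sum.cong[OF refl])
    fix x assume x: "x \<in> U"
    have "R - {x} \<subseteq> U" using Suc.prems by auto
    then show "pmf M x * QQ M k (R - {x}) = q x * (fact k * EE q U (R - {x}) $ k)"
      using Suc.IH assms(3) x by simp
  qed
  also have "\<dots> = fact (Suc k) * EE q U R $ Suc k"
    using EE_Suc[OF assms(1) Suc.prems] by simp
  finally show ?case .
qed

lemma coupon_nonneg:
  assumes "\<forall>i\<in>{1..n}. 0 \<le> q i" "sum q {1..n} \<le> 1"
  shows "0 \<le> coupon_weight n q x"
  using assms by (auto simp: coupon_weight_def)

lemma pmf_coupon:
  assumes "\<forall>i\<in>{1..n}. 0 \<le> q i" "sum q {1..n} \<le> 1"
  shows "pmf (coupon_pmf n q) x = coupon_weight n q x"
proof -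
  have nn: "\<And>x. 0 \<le> coupon_weight n q x" using coupon_nonneg[OF assms] .
  have "(\<integral>\<^sup>+x. ennreal (coupon_weight n q x) \<partial>count_space UNIV) = (\<Sum>x\<in>{0..n}. ennreal (coupon_weight n q x))"
    by (rule nn_integral_count_space') (auto simp: coupon_weight_def)
  also have "\<dots> = ennreal (\<Sum>x\<in>{0..n}. coupon_weight n q x)"
    using nn by (simp add: sum_ennreal)
  also have "(\<Sum>x\<in>{0..n}. coupon_weight n q x) = coupon_weight n q 0 + (\<Sum>x\<in>{1..n}. coupon_weight n q x)"
    by (simp add: sum.atLeast_Suc_atMost)
  also have "(\<Sum>x\<in>{1..n}. coupon_weight n q x) = sum q {1..n}"
    by (intro sum.cong) (auto simp: coupon_weight_def)
  finally have "(\<integral>\<^sup>+x. ennreal (coupon_weight n q x) \<partial>count_space UNIV) = 1"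
    by (simp add: coupon_weight_def)
  then show ?thesis unfolding coupon_pmf_def
    using nn by (subst pmf_embed_pmf) auto
qed

lemma T_gt_iff: "(T_nn n \<omega> > enat k) \<longleftrightarrow> \<not> {1..n} \<subseteq> set (stake k \<omega>)"
proof
  assume "T_nn n \<omega> > enat k"
  show "\<not> {1..n} \<subseteq> set (stake k \<omega>)"
  proof
    assume h: "{1..n} \<subseteq> set (stake k \<omega>)"
    then have "(LEAST t. {1..n} \<subseteq> set (stake t \<omega>)) \<le> k" by (rule Least_le)
    then have "T_nn n \<omega> \<le> enat k" using h unfolding T_nn_def by auto
    with \<open>T_nn n \<omega> > enat k\<close> show False by simp
  qed
next
  assume nc: "\<not> {1..n} \<subseteq> set (stake k \<omega>)"
  show "T_nn n \<omega> > enat k"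
  proof (cases "\<exists>t. {1..n} \<subseteq> set (stake t \<omega>)")
    case True
    define L where "L = (LEAST t. {1..n} \<subseteq> set (stake t \<omega>))"
    have cL: "{1..n} \<subseteq> set (stake L \<omega>)" unfolding L_def using True by (metis LeastI)
    have "k < L"
    proof (rule ccontr)
      assume "\<not> k < L"
      then have "stake L \<omega> @ stake (k - L) (sdrop L \<omega>) = stake k \<omega>"
        using stake_add[of L \<omega> "k - L"] by simp
      then have "set (stake L \<omega>) \<subseteq> set (stake k \<omega>)" by (metis Un_upper1 set_append)
      with cL nc show False by blast
    qed
    then show ?thesis using True unfolding T_nn_def L_def by simp
  next
    case False then show ?thesis unfolding T_nn_def by simp
  qed
qed

definition ZZ :: "nat \<Rightarrow> (nat \<Rightarrow> real) \<Rightarrow> real fps" where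
  "ZZ n q = fps_exp (1 - sum q {1..n}) * (\<Prod>r\<in>{1..n}. FF (q r))"

lemma tail_formula:
  assumes "\<forall>i\<in>{1..n}. 0 \<le> q i" "sum q {1..n} \<le> 1"
  shows "measure (draws n q) {\<omega>\<in>space (draws n q). T_nn n \<omega> > enat k} = 1 - fact k * ZZ n q $ k"
proof -
  let ?M = "coupon_pmf n q"
  interpret S: prob_space "stream_space (measure_pmf ?M)"
    by (rule prob_space.prob_space_stream_space[OF measure_pmf.prob_space_axioms])
  have pm: "\<And>x. pmf ?M x = coupon_weight n q x" using pmf_coupon[OF assms] .
  have sp: "set_pmf ?M \<subseteq> {0..n}"
    by (auto simp: set_pmf_iff pm coupon_weight_def split: if_splits)
  have ev: "{\<omega>\<in>space (stream_space (measure_pmf ?M)). {1..n} \<subseteq> set (stake k \<omega>)} \<in> S.events"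
    by measurable
  have eqset: "{\<omega>\<in>space (draws n q). T_nn n \<omega> > enat k} =
     space (stream_space (measure_pmf ?M)) - {\<omega>\<in>space (stream_space (measure_pmf ?M)). {1..n} \<subseteq> set (stake k \<omega>)}"
    unfolding draws_def T_gt_iff by auto
  have "measure (draws n q) {\<omega>\<in>space (draws n q). T_nn n \<omega> > enat k} = 1 - QQ ?M k {1..n}"
    unfolding eqset by (simp only: QQ_def draws_def S.prob_compl[OF ev])
  also have "QQ ?M k {1..n} = fact k * EE (coupon_weight n q) {0..n} {1..n} $ k"
    by (rule QQ_EE) (use sp pm in auto)
  also have "EE (coupon_weight n q) {0..n} {1..n} = ZZ n q"
  proof -
    have "{0..n} - {1..n} = {0::nat}" by auto
    moreover have "(\<Prod>r\<in>{1..n}. FF (coupon_weight n q r)) = (\<Prod>r\<in>{1..n}. FF (q r))"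
      by (intro prod.cong) (auto simp: coupon_weight_def)
    ultimately show ?thesis by (simp add: EE_def ZZ_def coupon_weight_def)
  qed
  finally show ?thesis .
qed

lemma exp_FF_le: "0 \<le> a \<Longrightarrow> 0 \<le> c \<Longrightarrow> fle (fps_exp c * FF a) (FF (a+c))"
proof -
  assume a: "0 \<le> a" "0 \<le> c"
  have eq: "fps_exp c * FF a = fps_exp (a + c) - fps_exp c"
    by (simp add: FF_def fps_exp_add_mult algebra_simps)
  show ?thesis unfolding fle_def eq
  proof
    fix k show "(fps_exp (a + c) - fps_exp c) $ k \<le> FF (a + c) $ k"
    proof -
      have "0 \<le> c^k / fact k" using a by simp
      then show ?thesis by (cases "k = 0") (simp_all add: FF_nth)
    qed
  qed
qed

theorem theorem4:
  fixes n k :: nat and p :: "nat \<Rightarrow> real"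
  assumes "n \<ge> 1"
    and "\<forall>i\<in>{1..n}. 0 < p i \<and> p i < 1"
    and "(\<Sum>i\<in>{1..n}. p i) \<le> 1"
  defines "p0 \<equiv> 1 - (\<Sum>i\<in>{1..n}. p i)"
  defines "v \<equiv> (\<lambda>i::nat. (1 - p0) / real n)"
  defines "u \<equiv> (\<lambda>i::nat. 1 / real n)"
  shows "measure (draws n p) {\<omega>\<in>space (draws n p). T_nn n \<omega> > enat k}
           \<ge> measure (draws n v) {\<omega>\<in>space (draws n v). T_nn n \<omega> > enat k}
       \<and> measure (draws n v) {\<omega>\<in>space (draws n v). T_nn n \<omega> > enat k}
           \<ge> measure (draws n u) {\<omega>\<in>space (draws n u). T_nn n \<omega> > enat k}"
proof -
  define s where "s = (\<Sum>i\<in>{1..n}. p i)"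
  have pnn: "\<forall>i\<in>{1..n}. 0 \<le> p i" using assms(2) by auto
  have s0: "0 \<le> s" unfolding s_def using pnn by (auto intro!: sum_nonneg)
  have s1: "s \<le> 1" using assms(3) s_def by simp
  have n0: "real n > 0" using assms(1) by simp
  have vs: "v = (\<lambda>i. s / real n)" unfolding v_def p0_def s_def by simp
  have sumv: "sum v {1..n} = s" unfolding vs using n0 by simp
  have sumu: "sum u {1..n} = 1" unfolding u_def using n0 by simp
  have vnn: "\<forall>i\<in>{1..n}. 0 \<le> v i" unfolding vs using s0 n0 by auto
  have unn: "\<forall>i\<in>{1..n}. 0 \<le> u i" unfolding u_def using n0 by auto
  have tp: "measure (draws n p) {\<omega>\<in>space (draws n p). T_nn n \<omega> > enat k} = 1 - fact k * ZZ n p $ k"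
    using tail_formula[OF pnn] assms(3) by simp
  have tv: "measure (draws n v) {\<omega>\<in>space (draws n v). T_nn n \<omega> > enat k} = 1 - fact k * ZZ n v $ k"
    using tail_formula[OF vnn] sumv s1 by simp
  have tu: "measure (draws n u) {\<omega>\<in>space (draws n u). T_nn n \<omega> > enat k} = 1 - fact k * ZZ n u $ k"
    using tail_formula[OF unn] sumu by simp
  have Zp: "ZZ n p = fps_exp (1 - s) * (\<Prod>r\<in>{1..n}. FF (p r))" unfolding ZZ_def s_def ..
  have Zv: "ZZ n v = fps_exp (1 - s) * (\<Prod>r\<in>{1..n}. FF (s / real n))" unfolding ZZ_def sumv unfolding vs ..
  have Zu: "ZZ n u = (\<Prod>r\<in>{1..n}. FF (1 / real n))" unfolding ZZ_def sumu unfolding u_def by simp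
  have le1: "fle (ZZ n p) (ZZ n v)"
    unfolding Zp Zv
  proof (rule fle_mult[OF fle_refl smooth_all])
    show "sum p {1..n} = real (card {1..n}) * (s / real n)" using n0 s_def by simp
    show "fnn (fps_exp (1 - s))" using s1 by (intro fnn_exp) simp
    show "fnn (\<Prod>r\<in>{1..n}. FF (p r))" using pnn by (intro fnn_prod fnn_FF) auto
  qed (use pnn in auto)
  define c where "c = 1 / real n - s / real n"
  have c0: "0 \<le> c" unfolding c_def using s1 n0 by (simp add: divide_right_mono diff_divide_distrib[symmetric])
  have "fps_exp (1 - s) = (\<Prod>r\<in>{1..n}. fps_exp c)"
  proof -
    have "real n * c = 1 - s" unfolding c_def using n0 by (simp add: field_simps)
    then show ?thesis by (simp add: fps_exp_power_mult)
  qed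
  then have Zv2: "ZZ n v = (\<Prod>r\<in>{1..n}. fps_exp c * FF (s / real n))"
    unfolding Zv by (simp add: power_mult_distrib)
  have le2: "fle (ZZ n v) (ZZ n u)"
    unfolding Zv2 Zu
  proof (rule fle_prod)
    fix i assume "i \<in> {1..n}"
    have "s / real n + c = 1 / real n" unfolding c_def by simp
    then show "fle (fps_exp c * FF (s / real n)) (FF (1 / real n)) \<and> fnn (fps_exp c * FF (s / real n))"
      using exp_FF_le[of "s / real n" c] c0 s0 n0 by (auto intro!: fnn_mult fnn_exp fnn_FF)
  qed
  have "ZZ n p $ k \<le> ZZ n v $ k" "ZZ n v $ k \<le> ZZ n u $ k" using le1 le2 by (auto simp: fle_def)
  then show ?thesis unfolding tp tv tu by (auto intro: mult_left_mono)
qed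

end
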